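(* Let $p<q$ be positive integers, let $\boldsymbol\alpha\in\mathbb C^p$ be a unit vector, $\boldsymbol\beta=\mathrm{FT}_p(\boldsymbol\alpha)$ and $\boldsymbol\gamma=\mathrm{FT}_q(\boldsymbol\alpha)$. Let $S\subseteq[p]$, let $0<\delta\le 1$ and $r>0$. Suppose that $\boldsymbol\beta_S$ is $\delta$-uniform and $\|\boldsymbol\beta_S\|_2^2=c$. Then if $q>\left(\frac{3200\,r\ln p}{\delta\sqrt c}\right)p$, $$\|\boldsymbol\gamma_{S'}\|_2^2\geq \frac{p}{q}\,\delta^2\left(1-\frac{1}{100r}\right)c .$$
   Context: Write $[N]=\{0,\dots,N-1\}$ and $\omega_N=e^{2\pi i/N}$. For $N\ge p$, $\mathrm{FT}_N(\boldsymbol\alpha)=\sum_{c=0}^{N-1}\left(\frac{1}{\sqrt N}\sum_{i=0}^{p-1}\omega_N^{ic}\alpha_i\right)|c\rangle\in\mathbb C^N$. Write $\boldsymbol\beta=(\beta_i)_{i\in[p]}$, $\boldsymbol\gamma=(\gamma_i)_{i\in[q]}$. For $i\in[p]$, $i'=\lfloor\frac qp i\rfloor$, and $S'=\{s':s\in S\}\subseteq[q]$. For a vector $\boldsymbol\zeta$ and an index set $T$, $\boldsymbol\zeta_T$ is the vector agreeing with $\boldsymbol\zeta$ on indices in $T$ and zero elsewhere. $\|\cdot\|_2$ is the Euclidean norm. A vector $\boldsymbol\zeta$ is $\delta$-uniform if for all $i,j$ with $\zeta_i,\zeta_j$ both nonzero, $\delta\le |\zeta_i|/|\zeta_j|\le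 1/\delta$. *)

theory Defs
  imports "HOL-Analysis.Analysis"
begin

text \<open>Vectors in C^n are represented as functions nat => complex, only indices < n matter.\<close>

definition omega :: "nat \<Rightarrow> complex" where
  "omega N = exp (2 * of_real pi * \<i> / of_nat N)"

definition FT :: "nat \<Rightarrow> nat \<Rightarrow> (nat \<Rightarrow> complex) \<Rightarrow> nat \<Rightarrow> complex" where
  "FT N p \<alpha> c = (if c < N then
      (1 / of_real (sqrt (real N))) * (\<Sum>i<p. omega N ^ (i * c) * \<alpha> i) else 0)"

definition restrict_vec :: "(nat \<Rightarrow> complex) \<Rightarrow> nat set \<Rightarrow> nat \<Rightarrow> complex" where
  "restrict_vec \<zeta> T i = (if i \<in> T then \<zeta> i else 0)"

definition sqnorm :: "nat \<Rightarrow> (nat \<Rightarrow> complex) \<Rightarrow> real" where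
  "sqnorm n \<zeta> = (\<Sum>i<n. (cmod (\<zeta> i))\<^sup>2)"

definition prime_idx :: "nat \<Rightarrow> nat \<Rightarrow> nat \<Rightarrow> nat" where
  "prime_idx p q i = nat \<lfloor>real q / real p * real i\<rfloor>"

definition delta_uniform :: "nat \<Rightarrow> real \<Rightarrow> (nat \<Rightarrow> complex) \<Rightarrow> bool" where
  "delta_uniform n \<delta> \<zeta> \<longleftrightarrow> (\<forall>i<n. \<forall>j<n. \<zeta> i \<noteq> 0 \<and> \<zeta> j \<noteq> 0 \<longrightarrow>
      \<delta> \<le> cmod (\<zeta> i) / cmod (\<zeta> j) \<and> cmod (\<zeta> i) / cmod (\<zeta> j) \<le> 1 / \<delta>)"

end

theory Submission
  imports Defs "HOL-Analysis.Harmonic_Numbers"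
begin

lemma omega_pow: "omega N ^ n = exp (of_nat n * (2 * of_real pi * \<i> / of_nat N))"
  unfolding omega_def by (rule exp_of_nat_mult[symmetric])

lemma orth_term:
  "omega p ^ (i * s) * cnj (omega p ^ (j * s)) =
     exp (of_int (int i - int j) * (2 * of_real pi * \<i> / of_nat p)) ^ s"
proof -
  have "omega p ^ (i * s) * cnj (omega p ^ (j * s)) =
     exp (of_nat (i * s) * (2 * of_real pi * \<i> / of_nat p)) *
     exp (- (of_nat (j * s) * (2 * of_real pi * \<i> / of_nat p)))"
  proof -
    have c: "cnj (of_nat (j * s) * (2 * of_real pi * \<i> / of_nat p)) = - (of_nat (j * s) * (2 * of_real pi * \<i> / of_nat p))"
      by simp
    show ?thesis unfolding omega_pow exp_cnj c ..
  qed
  also have "\<dots> = exp (of_nat s * (of_int (int i - int j) * (2 * of_real pi * \<i> / of_nat p)))"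
    by (simp add: exp_add[symmetric] algebra_simps diff_divide_distrib)
  also have "\<dots> = exp (of_int (int i - int j) * (2 * of_real pi * \<i> / of_nat p)) ^ s"
    by (rule exp_of_nat_mult)
  finally show ?thesis .
qed

lemma orth:
  assumes "i < p" "j < p"
  shows "(\<Sum>s<p. omega p ^ (i * s) * cnj (omega p ^ (j * s))) = (if i = j then of_nat p else 0)"
proof (cases "i = j")
  case True
  then show ?thesis unfolding orth_term by simp
next
  case False
  define w where "w = exp (of_int (int i - int j) * (2 * of_real pi * \<i> / of_nat p))"
  have p0: "p > 0" using assms by auto
  have "w ^ p = exp (of_nat p * (of_int (int i - int j) * (2 * of_real pi * \<i> / of_nat p)))"
    unfolding w_def by (rule exp_of_nat_mult[symmetric])
  also have "\<dots> = exp ((2 * of_int (int i - int j) * pi) * \<i>)"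
  proof -
    have pn: "(of_nat p :: complex) \<noteq> 0" using p0 by simp
    have "of_nat p * (of_int (int i - int j) * (2 * of_real pi * \<i> / of_nat p)) = (2 * of_int (int i - int j) * of_real pi) * (\<i>::complex)"
      using pn by (simp only: of_int_diff of_int_of_nat_eq) (simp add: field_simps)
    thus ?thesis by simp
  qed
  also have "\<dots> = 1"
    by (rule exp_integer_2pi) simp
  finally have wp: "w ^ p = 1" .
  have w1: "w \<noteq> 1"
  proof
    assume "w = 1"
    then obtain n :: int where n: "Im (of_int (int i - int j) * (2 * of_real pi * \<i> / of_nat p)) = of_int (2 * n) * pi"
      unfolding w_def exp_eq_1 by blast
    have "Im (of_int (int i - int j) * (2 * of_real pi * \<i> / of_nat p)) = real_of_int (int i - int j) * 2 * pi / real p"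
      using p0 by (simp add: Im_divide power2_eq_square field_simps)
    with n have "real_of_int (int i - int j) * 2 * pi / real p = of_int (2 * n) * pi" by simp
    hence e1: "real_of_int (int i - int j) * (2 * pi) = real_of_int (n * int p) * (2 * pi)"
      using p0 by (simp add: field_simps)
    have "real_of_int (int i - int j) = real_of_int (n * int p)"
      by (rule mult_right_cancel[THEN iffD1, OF _ e1]) simp
    hence e: "int i - int j = n * int p" by linarith
    show False
    proof (cases "n = 0")
      case True with e False show False by simp
    next
      case nz: False
      hence "\<bar>n\<bar> \<ge> 1" by linarith
      hence "\<bar>n\<bar> * int p \<ge> 1 * int p" by (intro mult_right_mono) auto
      hence "\<bar>n * int p\<bar> \<ge> int p" by (simp add: abs_mult)
      with e assms show False by linarith
    qed
  qed
  have "(\<Sum>s<p. omega p ^ (i * s) * cnj (omega p ^ (j * s))) = (\<Sum>s<p. w ^ s)"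
    by (simp only: orth_term w_def)
  also have "\<dots> = 0" using geometric_sum[OF w1] wp by simp
  finally show ?thesis using False by simp
qed

lemma parseval:
  "(\<Sum>s<p. (cmod (\<Sum>i<p. omega p ^ (i * s) * v i))\<^sup>2) = real p * (\<Sum>i<p. (cmod (v i))\<^sup>2)"
proof -
  have "complex_of_real (\<Sum>s<p. (cmod (\<Sum>i<p. omega p ^ (i * s) * v i))\<^sup>2)
     = (\<Sum>s<p. (\<Sum>i<p. omega p ^ (i * s) * v i) * cnj (\<Sum>j<p. omega p ^ (j * s) * v j))"
    unfolding of_real_sum complex_norm_square ..
  also have "\<dots> = (\<Sum>s<p. \<Sum>i<p. \<Sum>j<p. v i * cnj (v j) * (omega p ^ (i * s) * cnj (omega p ^ (j * s))))"
    unfolding cnj_sum sum_product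
    by (intro sum.cong refl) (simp add: algebra_simps)
  also have "\<dots> = (\<Sum>i<p. \<Sum>j<p. v i * cnj (v j) * (\<Sum>s<p. omega p ^ (i * s) * cnj (omega p ^ (j * s))))"
  proof -
    have "(\<Sum>s<p. \<Sum>i<p. \<Sum>j<p. v i * cnj (v j) * (omega p ^ (i * s) * cnj (omega p ^ (j * s))))
      = (\<Sum>i<p. \<Sum>s<p. \<Sum>j<p. v i * cnj (v j) * (omega p ^ (i * s) * cnj (omega p ^ (j * s))))"
      by (rule sum.swap)
    also have "\<dots> = (\<Sum>i<p. \<Sum>j<p. \<Sum>s<p. v i * cnj (v j) * (omega p ^ (i * s) * cnj (omega p ^ (j * s))))"
      by (rule sum.cong[OF refl], rule sum.swap)
    finally show ?thesis by (simp add: sum_distrib_left)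
  qed
  also have "\<dots> = (\<Sum>i<p. \<Sum>j<p. v i * cnj (v j) * (if i = j then of_nat p else 0))"
    by (intro sum.cong refl) (subst orth, auto)
  also have "\<dots> = (\<Sum>i<p. of_nat p * (v i * cnj (v i)))"
    by (simp add: if_distrib mult.commute cong: if_cong)
  also have "\<dots> = complex_of_real (real p * (\<Sum>i<p. (cmod (v i))\<^sup>2))"
    by (simp only: of_real_mult of_real_sum complex_norm_square sum_distrib_left of_real_of_nat_eq)
  finally show ?thesis using of_real_eq_iff by blast
qed

lemma sums_norm_le:
  fixes f :: "nat \<Rightarrow> 'a::banach"
  assumes "f sums x" "g sums y" "\<And>k. norm (f k) \<le> g k"
  shows "norm x \<le> y"
proof -
  have sg: "summable g" using assms(2) by (rule sums_summable)
  have sn: "summable (\<lambda>k. norm (f k))"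
    by (rule summable_comparison_test[OF _ sg]) (use assms(3) in auto)
  have "norm x = norm (suminf f)" using assms(1) by (simp add: sums_iff)
  also have "\<dots> \<le> (\<Sum>k. norm (f k))" by (rule summable_norm[OF sn])
  also have "\<dots> \<le> suminf g" by (rule suminf_le[OF assms(3) sn sg])
  also have "\<dots> = y" using assms(2) by (simp add: sums_iff)
  finally show ?thesis .
qed

lemma sum_restrict_sq:
  assumes "T \<subseteq> {..<n}"
  shows "(\<Sum>i<n. (cmod (restrict_vec \<zeta> T i))\<^sup>2) = (\<Sum>i\<in>T. (cmod (\<zeta> i))\<^sup>2)"
  by (rule sum.mono_neutral_cong_right) (use assms in \<open>auto simp: restrict_vec_def\<close>)

lemma L2_set_subset_mono:
  assumes "finite B" "A \<subseteq> B"
  shows "L2_set f A \<le> L2_set f B"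
  unfolding L2_set_def
  by (rule real_sqrt_le_mono, rule sum_mono2) (use assms in auto)

lemma exp_minus_one_le:
  fixes a :: real
  assumes "0 \<le> a" "a < 1"
  shows "exp a - 1 \<le> a / (1 - a)"
proof -
  have "1 - a \<le> exp (- a)" using exp_ge_add_one_self[of "-a"] by simp
  hence "(1 - a) * exp a \<le> exp (-a) * exp a" by (intro mult_right_mono) auto
  hence "(1 - a) * exp a \<le> 1" by (simp add: exp_minus field_simps)
  hence "exp a \<le> 1 / (1 - a)" using assms by (simp add: field_simps)
  thus ?thesis using assms by (simp add: field_simps)
qed

lemma final_arith:
  fixes \<delta> r c \<epsilon> :: real
  assumes "0 < \<delta>" "\<delta> \<le> 1" "1 < 100 * r" "0 < c" "0 \<le> \<epsilon>" "\<epsilon> \<le> sqrt c / (200 * r)"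
  shows "\<delta>\<^sup>2 * (1 - 1 / (100 * r)) * c \<le> (sqrt c - \<epsilon>)\<^sup>2"
proof -
  define x where "x = \<epsilon> / sqrt c"
  have sc: "sqrt c > 0" using assms by simp
  have r0: "r > 0" using assms by simp
  have ex: "\<epsilon> = x * sqrt c" unfolding x_def using sc by simp
  have x0: "0 \<le> x" unfolding x_def using assms sc by simp
  have x1: "x \<le> 1 / (200 * r)" unfolding x_def using assms sc r0 by (simp add: field_simps)
  have "(sqrt c - \<epsilon>)\<^sup>2 = c * (1 - x)\<^sup>2" using ex assms by (simp add: power2_eq_square algebra_simps)
  also have "c * (1 - x)\<^sup>2 \<ge> c * (1 - 2 * x)"
    using assms by (intro mult_left_mono) (auto simp: power2_eq_square algebra_simps)
  moreover have "1 - 2 * x \<ge> 1 - 1 / (100 * r)" using x1 r0 by (simp add: field_simps)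
  moreover have "1 - 1 / (100 * r) \<ge> 0" using assms by (simp add: field_simps)
  moreover have "\<delta>\<^sup>2 \<le> 1" using assms by (simp add: power_le_one)
  ultimately have "(1 - 1 / (100 * r)) * c \<le> (sqrt c - \<epsilon>)\<^sup>2"
    using assms by (smt (verit) mult.commute mult_left_mono)
  moreover have "\<delta>\<^sup>2 * (1 - 1 / (100 * r)) * c \<le> 1 * (1 - 1 / (100 * r)) * c"
    using \<open>\<delta>\<^sup>2 \<le> 1\<close> \<open>1 - 1 / (100 * r) \<ge> 0\<close> assms(4)
    by (intro mult_right_mono) auto
  ultimately show ?thesis by simp
qed

lemma eps_bound:
  fixes \<delta> r c :: real and p q :: nat
  assumes "2 \<le> p" "0 < \<delta>" "\<delta> \<le> 1" "1 < 100 * r" "0 < c" "c \<le> 1"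
    and "real q > (3200 * r * ln (real p) / (\<delta> * sqrt c)) * real p" "p < q"
  shows "exp (2 * pi * real (p - 1) / real q) - 1 \<le> sqrt c / (200 * r)"
proof -
  have r0: "r > 0" using assms by simp
  have sc: "0 < sqrt c" "sqrt c \<le> 1" using assms by auto
  have lnp: "ln (real p) \<ge> 2/3"
  proof -
    have "ln 2 \<le> ln (real p)" using assms(1) by (subst ln_le_cancel_iff) auto
    thus ?thesis using ln2_ge_two_thirds by linarith
  qed
  have q0: "real q > 0"
    using assms(8) by simp
  have "3200 * r * ln (real p) * real p < real q * (\<delta> * sqrt c)"
    using assms(7) assms(2) sc by (simp add: field_simps)
  moreover have "3200 * r * (2/3) * real p \<le> 3200 * r * ln (real p) * real p"
    using lnp r0 by (intro mult_right_mono mult_left_mono) auto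
  moreover have "real q * (\<delta> * sqrt c) \<le> real q * sqrt c"
    using q0 assms sc by (intro mult_left_mono) auto
  ultimately have h: "6400 * r * real p < 3 * real q * sqrt c" by linarith
  define a where "a = 2 * pi * real (p - 1) / real q"
  have a0: "0 \<le> a" unfolding a_def using q0 by simp
  have "a \<le> 2 * pi * real p / real q" unfolding a_def using q0 assms(1)
    by (intro divide_right_mono mult_left_mono) auto
  also have "\<dots> \<le> 63 / 10 * real p / real q"
    using pi_approx q0 by (intro divide_right_mono mult_right_mono) auto
  finally have a1: "a \<le> 63 / 10 * real p / real q" .
  have pq: "real p / real q < 3 * sqrt c / (6400 * r)"
    using h q0 r0 by (simp add: field_simps)
  have "a \<le> 63 / 10 * (real p / real q)" using a1 by simp
  also have "\<dots> \<le> 63 / 10 * (3 * sqrt c / (6400 * r))" using pq by simp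
  also have "\<dots> = 189 / 64000 * sqrt c / r" by simp
  finally have a2: "a \<le> 189 / 64000 * sqrt c / r" .
  have a3: "a < 3 / 10"
  proof -
    have "189 / 64000 * sqrt c / r \<le> 189 / 64000 / r" using sc r0 by (simp add: field_simps)
    also have "\<dots> < 3/10" using assms(4) r0 by (simp add: field_simps)
    finally show ?thesis using a2 by linarith
  qed
  have "exp a - 1 \<le> a / (1 - a)" using exp_minus_one_le a0 a3 by simp
  also have "\<dots> \<le> a / (7/10)" using a0 a3 by (intro divide_left_mono) auto
  also have "\<dots> \<le> (189 / 64000 * sqrt c / r) / (7/10)" using a2 by simp
  also have "\<dots> \<le> sqrt c / (200 * r)" using sc r0 by (simp add: field_simps)
  finally show ?thesis unfolding a_def .
qed

lemma prime_idx_props: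
  assumes "0 < p" "p < q" "s < p"
  shows "prime_idx p q s < q"
    and "real (prime_idx p q s) = real q / real p * real s - (real q / real p * real s - of_int \<lfloor>real q / real p * real s\<rfloor>)"
    and "0 \<le> real q / real p * real s - real (prime_idx p q s)"
    and "real q / real p * real s - real (prime_idx p q s) < 1"
proof -
  define x where "x = real q / real p * real s"
  have x0: "0 \<le> x" unfolding x_def by simp
  have xq: "x < real q" unfolding x_def using assms by (simp add: field_simps)
  have fl: "real (prime_idx p q s) = of_int \<lfloor>x\<rfloor>"
    unfolding prime_idx_def x_def[symmetric] using x0 by simp
  show "prime_idx p q s < q" using fl xq by (smt (verit) of_int_floor_le of_nat_less_iff)
  show "real (prime_idx p q s) = real q / real p * real s - (real q / real p * real s - of_int \<lfloor>real q / real p * real s\<rfloor>)"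
    using fl x_def by simp
  show "0 \<le> real q / real p * real s - real (prime_idx p q s)" using fl x_def by simp
  show "real q / real p * real s - real (prime_idx p q s) < 1" using fl x_def by linarith
qed

lemma prime_idx_inj:
  assumes "0 < p" "p < q"
  shows "inj_on (prime_idx p q) {..<p}"
proof (rule linorder_inj_onI)
  fix s t assume st: "s < t" "s \<in> {..<p}" "t \<in> {..<p}"
  have "real q / real p * real t \<ge> real q / real p * real s + real q / real p"
  proof -
    have "real s + 1 \<le> real t" using st by simp
    hence "real q / real p * (real s + 1) \<le> real q / real p * real t" by (rule mult_left_mono) simp
    thus ?thesis by (simp add: distrib_left)
  qed
  moreover have "real q / real p > 1" using assms by simp
  ultimately have "real q / real p * real t > real q / real p * real s + 1" by linarith
  hence "\<lfloor>real q / real p * real t\<rfloor> > \<lfloor>real q / real p * real s\<rfloor>" by linarith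
  moreover have "0 \<le> \<lfloor>real q / real p * real s\<rfloor>" by simp
  ultimately have "nat \<lfloor>real q / real p * real s\<rfloor> < nat \<lfloor>real q / real p * real t\<rfloor>"
    by (subst nat_less_eq_zless) auto
  thus "prime_idx p q s \<noteq> prime_idx p q t" unfolding prime_idx_def by (rule less_imp_neq)
qed auto

definition zz :: "nat \<Rightarrow> nat \<Rightarrow> nat \<Rightarrow> complex" where
  "zz p q s = - (2 * of_real pi * \<i> * of_real (real q / real p * real s - real (prime_idx p q s)) / of_nat q)"

lemma omega_shift:
  assumes "0 < p" "p < q"
  shows "omega q ^ (i * prime_idx p q s) = omega p ^ (i * s) * exp (of_nat i * zz p q s)"
proof -
  define \<theta> where "\<theta> = real q / real p * real s - real (prime_idx p q s)"
  have "real (prime_idx p q s) = real q / real p * real s - \<theta>" unfolding \<theta>_def by simp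
  hence "complex_of_real (real (prime_idx p q s)) = complex_of_real (real q / real p * real s - \<theta>)" by simp
  hence pe: "(of_nat (prime_idx p q s) :: complex) = of_nat q / of_nat p * of_nat s - of_real \<theta>"
    by simp
  have pn: "(of_nat p :: complex) \<noteq> 0" "(of_nat q :: complex) \<noteq> 0" using assms by auto
  have "of_nat (i * prime_idx p q s) * (2 * of_real pi * \<i> / of_nat q) =
        of_nat (i * s) * (2 * of_real pi * \<i> / of_nat p) + of_nat i * zz p q s"
    unfolding zz_def \<theta>_def[symmetric] of_nat_mult pe using pn
    by (simp add: field_simps)
  thus ?thesis unfolding omega_pow by (simp add: exp_add)
qed

lemma zz_norm:
  assumes "0 < p" "p < q" "s < p"
  shows "cmod (zz p q s) \<le> 2 * pi / real q"
proof -
  define \<theta> where "\<theta> = real q / real p * real s - real (prime_idx p q s)"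
  have t: "0 \<le> \<theta>" "\<theta> < 1" unfolding \<theta>_def using prime_idx_props[OF assms] by auto
  have "cmod (zz p q s) = 2 * pi * \<theta> / real q"
    unfolding zz_def \<theta>_def[symmetric] using t by (simp add: norm_mult norm_divide)
  also have "\<dots> \<le> 2 * pi * 1 / real q" using t by (intro divide_right_mono mult_left_mono) auto
  finally show ?thesis by simp
qed

definition Fv :: "nat \<Rightarrow> (nat \<Rightarrow> complex) \<Rightarrow> nat \<Rightarrow> nat \<Rightarrow> complex" where
  "Fv p \<alpha> k s = (\<Sum>i<p. omega p ^ (i * s) * (of_nat i ^ k * \<alpha> i))"

lemma g_sums:
  assumes "0 < p" "p < q"
  shows "(\<lambda>k. zz p q s ^ k / fact k * Fv p \<alpha> k s) sums (\<Sum>i<p. omega q ^ (i * prime_idx p q s) * \<alpha> i)"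
proof -
  have "\<And>i. (\<lambda>k. omega p ^ (i * s) * \<alpha> i * ((of_nat i * zz p q s) ^ k /\<^sub>R fact k))
            sums (omega p ^ (i * s) * \<alpha> i * exp (of_nat i * zz p q s))"
    by (rule sums_mult, rule exp_converges)
  hence "(\<lambda>k. \<Sum>i<p. omega p ^ (i * s) * \<alpha> i * ((of_nat i * zz p q s) ^ k /\<^sub>R fact k))
            sums (\<Sum>i<p. omega p ^ (i * s) * \<alpha> i * exp (of_nat i * zz p q s))"
    by (rule sums_sum)
  moreover have "(\<lambda>k. \<Sum>i<p. omega p ^ (i * s) * \<alpha> i * ((of_nat i * zz p q s) ^ k /\<^sub>R fact k))
     = (\<lambda>k. zz p q s ^ k / fact k * Fv p \<alpha> k s)"
    unfolding Fv_def sum_distrib_left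
    by (intro ext sum.cong refl) (simp add: scaleR_conv_of_real power_mult_distrib field_simps)
  moreover have "(\<Sum>i<p. omega p ^ (i * s) * \<alpha> i * exp (of_nat i * zz p q s))
     = (\<Sum>i<p. omega q ^ (i * prime_idx p q s) * \<alpha> i)"
    using omega_shift[OF assms] by (simp add: algebra_simps)
  ultimately show ?thesis by simp
qed

lemma e_sums:
  assumes "0 < p" "p < q"
  shows "(\<lambda>k. zz p q s ^ Suc k / fact (Suc k) * Fv p \<alpha> (Suc k) s) sums
           ((\<Sum>i<p. omega q ^ (i * prime_idx p q s) * \<alpha> i) - Fv p \<alpha> 0 s)"
  using g_sums[OF assms, of s \<alpha>] 
  by (subst sums_Suc_iff) simp

lemma Fv_L2:
  assumes "S \<subseteq> {..<p}" "sqnorm p \<alpha> = 1"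
  shows "L2_set (\<lambda>s. cmod (Fv p \<alpha> m s)) S \<le> sqrt (real p) * real (p - 1) ^ m"
proof -
  have "L2_set (\<lambda>s. cmod (Fv p \<alpha> m s)) S \<le> L2_set (\<lambda>s. cmod (Fv p \<alpha> m s)) {..<p}"
    by (rule L2_set_subset_mono) (use assms in auto)
  also have "\<dots> = sqrt (real p * (\<Sum>i<p. (cmod (of_nat i ^ m * \<alpha> i))\<^sup>2))"
    unfolding L2_set_def Fv_def by (subst parseval) (rule refl)
  also have "\<dots> \<le> sqrt (real p * (\<Sum>i<p. real (p - 1) ^ (2 * m) * (cmod (\<alpha> i))\<^sup>2))"
  proof (intro real_sqrt_le_mono mult_left_mono sum_mono)
    fix i assume "i \<in> {..<p}"
    hence "real i \<le> real (p - 1)" by auto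
    hence "real i ^ (2 * m) \<le> real (p - 1) ^ (2 * m)" by (intro power_mono) auto
    thus "(cmod (of_nat i ^ m * \<alpha> i))\<^sup>2 \<le> real (p - 1) ^ (2 * m) * (cmod (\<alpha> i))\<^sup>2"
      by (auto simp add: norm_mult norm_power power_mult_distrib power_mult[symmetric] mult.commute[of 2 m]
           intro!: mult_right_mono)
  qed simp
  also have "\<dots> = sqrt (real p * real (p - 1) ^ (2 * m))"
    using assms(2) by (cases "p = 0") (simp_all add: sqnorm_def sum_distrib_left[symmetric] of_nat_diff)
  also have "\<dots> = sqrt (real p) * real (p - 1) ^ m"
    by (simp add: real_sqrt_mult power_mult mult.commute[of 2 m] )
  finally show ?thesis .
qed

lemma e_L2:
  assumes "0 < p" "p < q" "S \<subseteq> {..<p}" "sqnorm p \<alpha> = 1"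
  shows "L2_set (\<lambda>s. cmod ((\<Sum>i<p. omega q ^ (i * prime_idx p q s) * \<alpha> i) - Fv p \<alpha> 0 s)) S
          \<le> sqrt (real p) * (exp (2 * pi * real (p - 1) / real q) - 1)"
proof -
  define e where "e s = (\<Sum>i<p. omega q ^ (i * prime_idx p q s) * \<alpha> i) - Fv p \<alpha> 0 s" for s
  define E where "E = L2_set (\<lambda>s. cmod (e s)) S"
  define N where "N = (\<Sum>s\<in>S. (cmod (e s))\<^sup>2)"
  define a where "a = 2 * pi * real (p - 1) / real q"
  define t where "t k s = zz p q s ^ Suc k / fact (Suc k) * Fv p \<alpha> (Suc k) s" for k s
  have fin: "finite S" using assms(3) finite_subset by blast
  have EN: "E = sqrt N" by (simp add: E_def N_def L2_set_def)
  have N0: "0 \<le> N" unfolding N_def by (simp add: sum_nonneg)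
  have a0: "0 \<le> a" unfolding a_def by simp
  have s1: "(\<lambda>k. \<Sum>s\<in>S. cnj (e s) * t k s) sums (\<Sum>s\<in>S. cnj (e s) * e s)"
    by (rule sums_sum, rule sums_mult) (unfold t_def e_def, rule e_sums[OF assms(1,2)])
  have s2: "(\<Sum>s\<in>S. cnj (e s) * e s) = of_real N"
    unfolding N_def of_real_sum complex_norm_square by (simp only: mult.commute)
  have tb: "norm (\<Sum>s\<in>S. cnj (e s) * t k s) \<le> E * (sqrt (real p) * (a ^ Suc k / fact (Suc k)))" for k
  proof -
    define C where "C = (2 * pi / real q) ^ Suc k / fact (Suc k)"
    have C0: "0 \<le> C" unfolding C_def by simp
    have Lt: "L2_set (\<lambda>s. cmod (t k s)) S \<le> L2_set (\<lambda>s. C * cmod (Fv p \<alpha> (Suc k) s)) S"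
    proof (rule L2_set_mono)
      fix s assume "s \<in> S"
      hence sp: "s < p" using assms(3) by auto
      have "cmod (t k s) = cmod (zz p q s) ^ Suc k / fact (Suc k) * cmod (Fv p \<alpha> (Suc k) s)"
        unfolding t_def by (simp add: norm_mult norm_divide norm_power del: fact_Suc)
      also have "\<dots> \<le> C * cmod (Fv p \<alpha> (Suc k) s)" unfolding C_def
        using zz_norm[OF assms(1,2) sp]
        by (intro mult_right_mono divide_right_mono power_mono) auto
      finally show "cmod (t k s) \<le> C * cmod (Fv p \<alpha> (Suc k) s)" .
    qed simp
    have Lt2: "L2_set (\<lambda>s. C * cmod (Fv p \<alpha> (Suc k) s)) S \<le> sqrt (real p) * (a ^ Suc k / fact (Suc k))"
    proof -
      have "L2_set (\<lambda>s. C * cmod (Fv p \<alpha> (Suc k) s)) S = C * L2_set (\<lambda>s. cmod (Fv p \<alpha> (Suc k) s)) S"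
        using C0 by (simp add: L2_set_right_distrib)
      also have "\<dots> \<le> C * (sqrt (real p) * real (p - 1) ^ Suc k)"
        using C0 Fv_L2[OF assms(3,4), of "Suc k"] by (intro mult_left_mono) (auto simp del: power_Suc)
      also have "\<dots> = sqrt (real p) * (a ^ Suc k / fact (Suc k))"
        unfolding C_def a_def by (simp add: power_mult_distrib power_divide field_simps)
      finally show ?thesis .
    qed
    have E0: "0 \<le> E" by (simp add: E_def)
    have "norm (\<Sum>s\<in>S. cnj (e s) * t k s) \<le> (\<Sum>s\<in>S. norm (cnj (e s) * t k s))"
      by (rule norm_sum)
    also have "\<dots> = (\<Sum>s\<in>S. \<bar>cmod (e s)\<bar> * \<bar>cmod (t k s)\<bar>)" by (simp add: norm_mult)
    also have "\<dots> \<le> E * L2_set (\<lambda>s. cmod (t k s)) S" unfolding E_def by (rule L2_set_mult_ineq)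
    also have "\<dots> \<le> E * (sqrt (real p) * (a ^ Suc k / fact (Suc k)))"
      using Lt Lt2 E0 by (intro mult_left_mono) auto
    finally show ?thesis .
  qed
  have "(\<lambda>n. a ^ n / fact n) sums exp a" using exp_converges[of a] by (simp add: divide_inverse mult.commute)
  hence "(\<lambda>n. a ^ Suc n / fact (Suc n)) sums (exp a - 1)" by (subst sums_Suc_iff) simp
  hence s3: "(\<lambda>k. E * (sqrt (real p) * (a ^ Suc k / fact (Suc k)))) sums (E * (sqrt (real p) * (exp a - 1)))"
    by (intro sums_mult)
  have "norm (complex_of_real N) \<le> E * (sqrt (real p) * (exp a - 1))"
    by (rule sums_norm_le[OF s1[unfolded s2] s3 tb])
  hence NE: "E\<^sup>2 \<le> E * (sqrt (real p) * (exp a - 1))" using N0 EN by simp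
  have X0: "0 \<le> sqrt (real p) * (exp a - 1)" using a0 by simp
  have "E \<le> sqrt (real p) * (exp a - 1)"
  proof (cases "E = 0")
    case True thus ?thesis using X0 by simp
  next
    case False
    hence "E > 0" using EN N0 by simp
    thus ?thesis using NE by (simp add: power2_eq_square)
  qed
  thus ?thesis unfolding E_def e_def a_def .
qed

theorem lemma2:
  fixes p q :: nat and \<alpha> :: "nat \<Rightarrow> complex" and S :: "nat set"
    and \<delta> r c :: real
  assumes "0 < p" and "p < q"
    and "sqnorm p \<alpha> = 1"
    and "S \<subseteq> {..<p}"
    and "0 < \<delta>" and "\<delta> \<le> 1" and "0 < r"
    and "delta_uniform p \<delta> (restrict_vec (FT p p \<alpha>) S)"
    and "sqnorm p (restrict_vec (FT p p \<alpha>) S) = c"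
    and "real q > (3200 * r * ln (real p) / (\<delta> * sqrt c)) * real p"
  shows "sqnorm q (restrict_vec (FT q p \<alpha>) (prime_idx p q ` S))
           \<ge> real p / real q * \<delta>\<^sup>2 * (1 - 1 / (100 * r)) * c"
proof -
  have lhs0: "0 \<le> sqnorm q (restrict_vec (FT q p \<alpha>) (prime_idx p q ` S))"
    unfolding sqnorm_def by (simp add: sum_nonneg)
  have c0: "0 \<le> c" using assms(9) unfolding sqnorm_def by (auto intro: sum_nonneg)
  show ?thesis
  proof (cases "100 * r \<le> 1 \<or> c = 0")
    case True
    have "real p / real q * \<delta>\<^sup>2 * (1 - 1 / (100 * r)) * c \<le> 0"
    proof (cases "c = 0")
      case False
      with True have "100 * r \<le> 1" by simp
      hence "1 - 1 / (100 * r) \<le> 0" using assms(7) by (simp add: field_simps)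
      have "0 \<le> real p / real q * \<delta>\<^sup>2" by simp
      have "real p / real q * \<delta>\<^sup>2 * (1 - 1 / (100 * r)) \<le> 0"
        by (rule mult_nonneg_nonpos[OF \<open>0 \<le> real p / real q * \<delta>\<^sup>2\<close> \<open>1 - 1 / (100 * r) \<le> 0\<close>])
      thus ?thesis using c0 by (rule mult_nonpos_nonneg)
    qed simp
    thus ?thesis using lhs0 by linarith
  next
    case False
    hence r1: "1 < 100 * r" and cpos: "0 < c" using c0 by auto
    define g where "g s = (\<Sum>i<p. omega q ^ (i * prime_idx p q s) * \<alpha> i)" for s
    define \<epsilon> where "\<epsilon> = exp (2 * pi * real (p - 1) / real q) - 1"
    have fin: "finite S" using assms(4) finite_subset by blast
    have pc: "real p * c = (\<Sum>s\<in>S. (cmod (Fv p \<alpha> 0 s))\<^sup>2)"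
    proof -
      have "c = (\<Sum>s\<in>S. (cmod (FT p p \<alpha> s))\<^sup>2)"
        using assms(9) sum_restrict_sq[OF assms(4)] unfolding sqnorm_def by simp
      also have "\<dots> = (\<Sum>s\<in>S. (cmod (Fv p \<alpha> 0 s))\<^sup>2 / real p)"
      proof (intro sum.cong refl)
        fix s assume "s \<in> S"
        hence "s < p" using assms(4) by auto
        thus "(cmod (FT p p \<alpha> s))\<^sup>2 = (cmod (Fv p \<alpha> 0 s))\<^sup>2 / real p"
          unfolding FT_def Fv_def by (simp add: norm_mult norm_divide power_divide)
      qed
      finally show ?thesis using assms(1) by (simp add: sum_divide_distrib[symmetric])
    qed
    have L0: "L2_set (\<lambda>s. cmod (Fv p \<alpha> 0 s)) S = sqrt (real p) * sqrt c"
      unfolding L2_set_def pc[symmetric] by (simp add: real_sqrt_mult)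
    have c1: "c \<le> 1"
    proof -
      have "sqrt (real p) * sqrt c \<le> sqrt (real p) * 1"
        using Fv_L2[OF assms(4,3), of 0] L0 by simp
      hence "sqrt c \<le> 1" using assms(1) by simp
      thus ?thesis by simp
    qed
    have epsb: "\<epsilon> \<le> sqrt c / (200 * r)"
    proof (cases "p = 1")
      case True thus ?thesis unfolding \<epsilon>_def using cpos assms(7) by simp
    next
      case False
      hence "2 \<le> p" using assms(1) by simp
      thus ?thesis unfolding \<epsilon>_def
        by (rule eps_bound) (use assms r1 cpos c1 in auto)
    qed
    have eps0: "0 \<le> \<epsilon>" unfolding \<epsilon>_def by simp
    have tri: "sqrt (real p) * sqrt c \<le> L2_set (\<lambda>s. cmod (g s)) S + sqrt (real p) * \<epsilon>"
    proof -
      have "sqrt (real p) * sqrt c \<le> L2_set (\<lambda>s. cmod (g s) + cmod (g s - Fv p \<alpha> 0 s)) S"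
        unfolding L0[symmetric]
      proof (rule L2_set_mono)
        fix s show "cmod (Fv p \<alpha> 0 s) \<le> cmod (g s) + cmod (g s - Fv p \<alpha> 0 s)"
          using norm_triangle_ineq4[of "g s" "g s - Fv p \<alpha> 0 s"] by simp
      qed simp
      also have "\<dots> \<le> L2_set (\<lambda>s. cmod (g s)) S + L2_set (\<lambda>s. cmod (g s - Fv p \<alpha> 0 s)) S"
        by (rule L2_set_triangle_ineq)
      also have "L2_set (\<lambda>s. cmod (g s - Fv p \<alpha> 0 s)) S \<le> sqrt (real p) * \<epsilon>"
        unfolding g_def \<epsilon>_def by (rule e_L2[OF assms(1,2,4,3)])
      finally show ?thesis by simp
    qed
    have sce: "0 \<le> sqrt c - \<epsilon>"
    proof -
      have "sqrt c / (200 * r) \<le> sqrt c" using r1 cpos by (simp add: field_simps)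
      thus ?thesis using epsb by linarith
    qed
    have Lg: "sqrt (real p) * (sqrt c - \<epsilon>) \<le> L2_set (\<lambda>s. cmod (g s)) S"
      using tri by (simp add: algebra_simps)
    have "real p * (sqrt c - \<epsilon>)\<^sup>2 = (sqrt (real p) * (sqrt c - \<epsilon>))\<^sup>2"
      by (simp add: power_mult_distrib)
    also have "\<dots> \<le> (L2_set (\<lambda>s. cmod (g s)) S)\<^sup>2"
      using Lg sce by (intro power_mono) auto
    also have "\<dots> = (\<Sum>s\<in>S. (cmod (g s))\<^sup>2)"
      unfolding L2_set_def by (simp add: sum_nonneg)
    finally have gS: "real p * (sqrt c - \<epsilon>)\<^sup>2 \<le> (\<Sum>s\<in>S. (cmod (g s))\<^sup>2)" .
    have lhs_eq: "sqnorm q (restrict_vec (FT q p \<alpha>) (prime_idx p q ` S)) = (\<Sum>s\<in>S. (cmod (g s))\<^sup>2) / real q"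
    proof -
      have sub: "prime_idx p q ` S \<subseteq> {..<q}"
        using prime_idx_props(1)[OF assms(1,2)] assms(4) by auto
      have inj: "inj_on (prime_idx p q) S"
        using prime_idx_inj[OF assms(1,2)] assms(4) by (rule inj_on_subset)
      have "sqnorm q (restrict_vec (FT q p \<alpha>) (prime_idx p q ` S))
          = (\<Sum>j\<in>prime_idx p q ` S. (cmod (FT q p \<alpha> j))\<^sup>2)"
        unfolding sqnorm_def by (rule sum_restrict_sq[OF sub])
      also have "\<dots> = (\<Sum>s\<in>S. (cmod (FT q p \<alpha> (prime_idx p q s)))\<^sup>2)"
        by (rule sum.reindex[OF inj, unfolded comp_def])
      also have "\<dots> = (\<Sum>s\<in>S. (cmod (g s))\<^sup>2 / real q)"
      proof (intro sum.cong refl)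
        fix s assume "s \<in> S"
        hence "s < p" using assms(4) by auto
        hence "prime_idx p q s < q" using prime_idx_props(1)[OF assms(1,2)] by blast
        thus "(cmod (FT q p \<alpha> (prime_idx p q s)))\<^sup>2 = (cmod (g s))\<^sup>2 / real q"
          unfolding FT_def g_def by (simp add: norm_mult norm_divide power_divide)
      qed
      finally show ?thesis by (simp add: sum_divide_distrib[symmetric])
    qed
    have fa: "\<delta>\<^sup>2 * (1 - 1 / (100 * r)) * c \<le> (sqrt c - \<epsilon>)\<^sup>2"
      by (rule final_arith) (use assms r1 cpos eps0 epsb in auto)
    have "real p / real q * \<delta>\<^sup>2 * (1 - 1 / (100 * r)) * c
        = real p / real q * (\<delta>\<^sup>2 * (1 - 1 / (100 * r)) * c)" by simp
    also have "\<dots> \<le> real p / real q * (sqrt c - \<epsilon>)\<^sup>2"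
      using fa by (intro mult_left_mono) auto
    also have "\<dots> = real p * (sqrt c - \<epsilon>)\<^sup>2 / real q" by simp
    also have "\<dots> \<le> (\<Sum>s\<in>S. (cmod (g s))\<^sup>2) / real q"
      using gS by (intro divide_right_mono) auto
    finally show ?thesis using lhs_eq by simp
  qed
qed

end
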